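(* Let $n\ge2$, let $I$ be an ideal of $\Phi_{A_{n-1}}$ such that $I^c$ is full, let $\mathcal{A}_I=\{\{x\in\mathbb{R}^n:x_i-x_j=0\}: e_i-e_j\in I^c\}$, let $A^{(1)}|\dots|A^{(r)}$ be the partition of $[n]$ in accordance with $I$, and let $R^{(u)}=\{v\in\{u+1,\dots,r\}: s_I(A^{(u)})\cap s_I(A^{(v)})\ne\emptyset\}$. Then for every odd prime $p$, $$\bar\chi_{\mathcal{A}_I}(p,t)=\frac1p\sum_{(a^{(u)}_s)}\ \prod_{u=1}^r\binom{\#A^{(u)}}{a^{(u)}_1,\dots,a^{(u)}_p}\ \cdot\ t^{\sum_{u=1}^r\sum_{s=1}^p\left(\binom{a^{(u)}_s}{2}+a^{(u)}_s\sum_{v\in R^{(u)}}a^{(v)}_s\right)},$$ where the sum runs over all families of nonnegative integers $(a^{(u)}_s)_{u\in[r],\,s\in[p]}$ with $a^{(u)}_1+\dots+a^{(u)}_p=\#A^{(u)}$ for each $u\in[r]$.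
   Context: $\Phi^+_{A_{n-1}}=\{e_i-e_j:1\le i<j\le n\}$ with simple roots $e_i-e_{i+1}$, $i\in[n-1]$. The partial order $\preceq$: $e_i-e_j\preceq e_{i'}-e_{j'}$ iff $i'\le i$ and $j\le j'$. An ideal is a subset $I\subseteq\Phi^+_{A_{n-1}}$ with $u\in I$, $u\preceq v\Rightarrow v\in I$; $I^c=\Phi^+_{A_{n-1}}\setminus I$. $I^c$ is full if it contains every simple root. Let $e_{i_1}-e_{j_1},\dots,e_{i_k}-e_{j_k}$ be the maximal elements of $I^c$. The signature of $u\in[n]$ is $s_I(u)=\{l\in[k]: i_l\le u\le j_l\}$. The partition of $[n]$ in accordance with $I$ is the partition $A^{(1)}|\dots|A^{(r)}$ into the maximal nonempty subsets on which $s_I$ is constant, indexed so that $\min A^{(1)}<\dots<\min A^{(r)}$; $s_I(A^{(u)})$ is the common value of $s_I$ on $A^{(u)}$. For a subarrangement $\mathcal{B}$, $\mathrm{r}(\mathcal{B})=n-\dim\bigcap\mathcal{B}$ (with $\bigcap\emptyset=\mathbb{R}^n$). The coboundary polynomial is $\bar\chi_{\mathcal{A}}(q,t)=\sum_{\mathcal{B}\subseteq\mathcal{A}}q^{\mathrm{r}(\mathcal{A})-\mathrm{r}(\mathcal{B})}(t-1)^{\#\mathcal{B}}$. *)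

theory Defs
  imports Complex_Main HOL.Vector_Spaces "HOL-Library.Function_Algebras" "HOL-Library.FuncSet" "HOL-Computational_Algebra.Primes"
begin

text \<open>Positive roots e_i - e_j of A_{n-1}, encoded as pairs (i,j) with 1 <= i < j <= n.\<close>
definition posroots :: "nat \<Rightarrow> (nat \<times> nat) set" where
  "posroots n = {(i, j). 1 \<le> i \<and> i < j \<and> j \<le> n}"

definition root_le :: "nat \<times> nat \<Rightarrow> nat \<times> nat \<Rightarrow> bool" where
  "root_le u v \<longleftrightarrow> fst v \<le> fst u \<and> snd u \<le> snd v"

definition is_ideal :: "nat \<Rightarrow> (nat \<times> nat) set \<Rightarrow> bool" where
  "is_ideal n I \<longleftrightarrow> I \<subseteq> posroots n \<and>
     (\<forall>u\<in>I. \<forall>v\<in>posroots n. root_le u v \<longrightarrow> v \<in> I)"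

definition compl_ideal :: "nat \<Rightarrow> (nat \<times> nat) set \<Rightarrow> (nat \<times> nat) set" where
  "compl_ideal n I = posroots n - I"

definition is_full :: "nat \<Rightarrow> (nat \<times> nat) set \<Rightarrow> bool" where
  "is_full n I \<longleftrightarrow> (\<forall>i\<in>{1..<n}. (i, i + 1) \<in> compl_ideal n I)"

definition max_compl :: "nat \<Rightarrow> (nat \<times> nat) set \<Rightarrow> (nat \<times> nat) set" where
  "max_compl n I = {u \<in> compl_ideal n I. \<forall>v\<in>compl_ideal n I. root_le u v \<longrightarrow> v = u}"

text \<open>Signature of w: the maximal elements e_i - e_j of I^c with i <= w <= j
  (identified with themselves rather than with their index l in [k]).\<close>
definition signature :: "nat \<Rightarrow> (nat \<times> nat) set \<Rightarrow> nat \<Rightarrow> (nat \<times> nat) set" where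
  "signature n I w = {(i, j) \<in> max_compl n I. i \<le> w \<and> w \<le> j}"

text \<open>Blocks of the partition of [n] in accordance with I: the maximal
  nonempty subsets of [n] on which the signature is constant.\<close>
definition blocks :: "nat \<Rightarrow> (nat \<times> nat) set \<Rightarrow> nat set set" where
  "blocks n I = (\<lambda>w. {w' \<in> {1..n}. signature n I w' = signature n I w}) ` {1..n}"

definition block_sig :: "nat \<Rightarrow> (nat \<times> nat) set \<Rightarrow> nat set \<Rightarrow> (nat \<times> nat) set" where
  "block_sig n I B = signature n I (Min B)"

text \<open>R^{(u)}: blocks coming later (larger minimum) whose signature meets that of B.\<close>
definition later_blocks :: "nat \<Rightarrow> (nat \<times> nat) set \<Rightarrow> nat set \<Rightarrow> nat set set" where
  "later_blocks n I B = {C \<in> blocks n I. Min B < Min C \<and>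
      block_sig n I B \<inter> block_sig n I C \<noteq> {}}"

text \<open>R^n modelled as real functions on nat supported in {1..n}.\<close>
definition ambient :: "nat \<Rightarrow> (nat \<Rightarrow> real) set" where
  "ambient n = {x. \<forall>k. k \<notin> {1..n} \<longrightarrow> x k = 0}"

definition hyperplane :: "nat \<Rightarrow> nat \<Rightarrow> nat \<Rightarrow> (nat \<Rightarrow> real) set" where
  "hyperplane n i j = {x \<in> ambient n. x i - x j = 0}"

definition fscale :: "real \<Rightarrow> (nat \<Rightarrow> real) \<Rightarrow> (nat \<Rightarrow> real)" where
  "fscale c x = (\<lambda>k. c * x k)"

definition vdim :: "(nat \<Rightarrow> real) set \<Rightarrow> nat" where
  "vdim S = vector_space.dim fscale S"

text \<open>Rank r(B) = n - dim (intersection of B), intersection of the empty family = R^n.\<close>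
definition arr_rank :: "nat \<Rightarrow> (nat \<Rightarrow> real) set set \<Rightarrow> nat" where
  "arr_rank n B = n - vdim (ambient n \<inter> \<Inter>B)"

definition coboundary :: "nat \<Rightarrow> (nat \<Rightarrow> real) set set \<Rightarrow> real \<Rightarrow> real \<Rightarrow> real" where
  "coboundary n A q t = (\<Sum>B\<in>Pow A. q ^ (arr_rank n A - arr_rank n B) * (t - 1) ^ card B)"

definition arrangement_of :: "nat \<Rightarrow> (nat \<times> nat) set \<Rightarrow> (nat \<Rightarrow> real) set set" where
  "arrangement_of n I = (\<lambda>(i, j). hyperplane n i j) ` compl_ideal n I"

definition multinomial :: "nat \<Rightarrow> nat \<Rightarrow> (nat \<Rightarrow> nat) \<Rightarrow> nat" where
  "multinomial p m a = fact m div (\<Prod>s\<in>{1..p}. fact (a s))"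

definition families :: "nat \<Rightarrow> (nat \<times> nat) set \<Rightarrow> nat \<Rightarrow> (nat set \<Rightarrow> nat \<Rightarrow> nat) set" where
  "families n I p = (\<Pi>\<^sub>E B\<in>blocks n I.
      {f \<in> {1..p} \<rightarrow>\<^sub>E {0..card B}. (\<Sum>s\<in>{1..p}. f s) = card B})"

definition exponent :: "nat \<Rightarrow> (nat \<times> nat) set \<Rightarrow> nat \<Rightarrow> (nat set \<Rightarrow> nat \<Rightarrow> nat) \<Rightarrow> nat" where
  "exponent n I p a = (\<Sum>B\<in>blocks n I. \<Sum>s\<in>{1..p}.
      (a B s choose 2) + a B s * (\<Sum>C\<in>later_blocks n I B. a C s))"

end

theory Submission imports Defs begin

interpretation FV: vector_space fscale
  by unfold_locales (auto simp: fscale_def algebra_simps fun_eq_iff)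

lemma sum_fun_apply: "(sum g A) (k::'b) = (\<Sum>c\<in>A. (g c k :: 'c::comm_monoid_add))"
  by (induction A rule: infinite_finite_induct) auto

definition ind :: "nat set \<Rightarrow> nat \<Rightarrow> real" where
  "ind c = (\<lambda>k. if k \<in> c then 1 else 0)"

lemma inj_ind: "inj ind"
proof
  fix c d assume "ind c = ind d"
  then have "\<forall>k. (k \<in> c) = (k \<in> d)" unfolding ind_def by (metis zero_neq_one)
  then show "c = d" by auto
qed

lemma dim_classes:
  assumes eq: "equiv S R" and fin: "finite S"
  shows "FV.dim {x. (\<forall>k. k \<notin> S \<longrightarrow> x k = 0) \<and> (\<forall>(i,j)\<in>R. x i = x j)} = card (S // R)"
    (is "FV.dim ?V = _")
proof (rule FV.dim_unique)
  let ?Q = "S // R"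
  have finQ: "finite ?Q"
  proof (rule finite_subset[of _ "Pow S"])
    show "?Q \<subseteq> Pow S" using eq by (auto dest: in_quotient_imp_subset)
  qed (use fin in simp)
  show "ind ` ?Q \<subseteq> ?V"
  proof clarify
    fix c assume c: "c \<in> ?Q"
    have cS: "c \<subseteq> S" using c eq by (meson Union_quotient Union_upper equiv_type in_quotient_imp_subset) 
    show "(\<forall>k. k \<notin> S \<longrightarrow> ind c k = 0) \<and> (\<forall>(i,j)\<in>R. ind c i = ind c j)"
    proof safe
      fix k assume "k \<notin> S" then show "ind c k = 0" using cS by (auto simp: ind_def)
    next
      fix i j assume "(i,j) \<in> R"
      moreover obtain a where "c = R `` {a}" using c by (auto elim: quotientE)
      moreover have "trans R" "sym R" using eq unfolding equiv_def by auto
      ultimately have "i \<in> c \<longleftrightarrow> j \<in> c"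
        by (metis Image_singleton_iff symD transD)
      then show "ind c i = ind c j" by (simp add: ind_def)
    qed
  qed
  show "card (ind ` ?Q) = card ?Q" using inj_ind by (simp add: card_image inj_on_subset)
  show "?V \<subseteq> FV.span (ind ` ?Q)"
  proof
    fix x assume x: "x \<in> ?V"
    define rep where "rep c = (SOME k. k \<in> c)" for c :: "nat set"
    have "x = (\<Sum>c\<in>?Q. fscale (x (rep c)) (ind c))"
    proof
      fix k
      show "x k = (\<Sum>c\<in>?Q. fscale (x (rep c)) (ind c)) k"
      proof (cases "k \<in> S")
        case True
        let ?c = "R `` {k}"
        have cQ: "?c \<in> ?Q" using True by (simp add: quotientI)
        have kc: "k \<in> ?c" by (rule equiv_class_self[OF eq True])
        have "(\<Sum>c\<in>?Q. fscale (x (rep c)) (ind c) k) = (\<Sum>c\<in>{?c}. fscale (x (rep c)) (ind c) k)"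
        proof (rule sum.mono_neutral_right)
          show "\<forall>c\<in>?Q - {?c}. fscale (x (rep c)) (ind c) k = 0"
          proof
            fix c assume c: "c \<in> ?Q - {?c}"
            obtain a where a: "a \<in> S" "c = R `` {a}" using c by (auto elim: quotientE)
            have "k \<notin> c"
            proof
              assume "k \<in> c"
              then have "(a,k) \<in> R" using a by simp
              then have "c = ?c" using a equiv_class_eq[OF eq] by simp
              then show False using c by simp
            qed
            then show "fscale (x (rep c)) (ind c) k = 0" by (simp add: fscale_def ind_def)
          qed
        qed (use finQ cQ in auto)
        also have "\<dots> = x (rep ?c)" using kc
          by (simp add: fscale_def ind_def)
        also have "\<dots> = x k"
        proof -
          have "rep ?c \<in> ?c" unfolding rep_def using kc
            by (rule someI)
          then have "(k, rep ?c) \<in> R" by simp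
          then show ?thesis using x by auto
        qed
        finally show ?thesis by (simp add: sum_fun_apply)
      next
        case False
        have "\<forall>c\<in>?Q. fscale (x (rep c)) (ind c) k = 0"
        proof
          fix c assume c: "c \<in> ?Q"
          have cS: "c \<subseteq> S" using c eq by (meson Union_quotient Union_upper equiv_type in_quotient_imp_subset)
          then show "fscale (x (rep c)) (ind c) k = 0" using False by (auto simp: fscale_def ind_def)
        qed
        then show ?thesis using False x by (simp add: sum_fun_apply)
      qed
    qed
    also have "\<dots> \<in> FV.span (ind ` ?Q)"
      by (intro FV.span_sum FV.span_scale FV.span_base) auto
    finally show "x \<in> FV.span (ind ` ?Q)" .
  qed
  show "FV.independent (ind ` ?Q)"
  proof (rule FV.independent_if_scalars_zero)
    show "finite (ind ` ?Q)" using finQ by simp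
    fix f b assume sum0: "(\<Sum>b\<in>ind ` ?Q. fscale (f b) b) = 0" and b: "b \<in> ind ` ?Q"
    then obtain c where c: "c \<in> ?Q" "b = ind c" by auto
    have "c \<noteq> {}" using c eq by (simp add: in_quotient_imp_non_empty)
    then obtain k where k: "k \<in> c" by auto
    have "0 = (\<Sum>b\<in>ind ` ?Q. fscale (f b) b) k" using sum0 by simp
    also have "\<dots> = (\<Sum>b\<in>ind ` ?Q. f b * b k)" by (simp add: sum_fun_apply fscale_def)
    also have "\<dots> = (\<Sum>b\<in>{ind c}. f b * b k)"
    proof (rule sum.mono_neutral_right)
      show "\<forall>b\<in>ind ` ?Q - {ind c}. f b * b k = 0"
      proof
        fix b' assume "b' \<in> ind ` ?Q - {ind c}"
        then obtain c' where c': "c' \<in> ?Q" "b' = ind c'" "c' \<noteq> c" by auto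
        have "k \<notin> c'" using c' c k eq by (meson quotient_disj disjoint_iff)
        then show "f b' * b' k = 0" using c' by (simp add: ind_def)
      qed
    qed (use finQ c in auto)
    also have "\<dots> = f b" using k c by (simp add: ind_def)
    finally show "f b = 0" by simp
  qed
qed


definition grel :: "nat set \<Rightarrow> (nat \<times> nat) set \<Rightarrow> (nat \<times> nat) set" where
  "grel S F = (F \<union> F\<inverse> \<union> Id_on S)\<^sup>+"

lemma grel_equiv:
  assumes "F \<subseteq> S \<times> S" shows "equiv S (grel S F)"
proof -
  let ?G = "F \<union> F\<inverse> \<union> Id_on S"
  have G: "?G \<subseteq> S \<times> S" using assms by auto
  have "?G\<^sup>+ \<subseteq> S \<times> S" using trancl_subset_Sigma[OF G] .
  moreover have "\<forall>x\<in>S. (x,x) \<in> ?G\<^sup>+" by auto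
  moreover have "sym (?G\<^sup>+)" by (intro sym_trancl) (auto simp: sym_def)
  moreover have "trans (?G\<^sup>+)" by simp
  ultimately show ?thesis unfolding equiv_def grel_def refl_on_def by auto
qed

lemma const_grel:
  assumes "\<forall>(i,j)\<in>F. x i = x j" and "(a,b) \<in> grel S F"
  shows "x a = x b"
  using assms(2) unfolding grel_def
proof (induction rule: trancl_induct)
  case (base y) then show ?case using assms(1) by auto
next
  case (step y z) then show ?case using assms(1) by auto
qed

lemma F_sub_grel: "F \<subseteq> grel S F"
  unfolding grel_def by auto

lemma const_iff_grel:
  "(\<forall>(i,j)\<in>F. x i = x j) \<longleftrightarrow> (\<forall>(i,j)\<in>grel S F. x i = x j)"
  using const_grel[of F x _ _ S] F_sub_grel[of F S] by blast

lemma card_quotient_le: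
  assumes "equiv S R" "finite S" shows "card (S // R) \<le> card S"
proof -
  have "S // R = (\<lambda>k. R `` {k}) ` S" unfolding quotient_def by auto
  then show ?thesis by (simp add: card_image_le assms)
qed

lemma card_quotient_pos:
  assumes "equiv S R" "finite S" "S \<noteq> {}" shows "card (S // R) \<ge> 1"
proof -
  have "S // R = (\<lambda>k. R `` {k}) ` S" unfolding quotient_def by auto
  moreover have "finite (S // R)"
    by (rule finite_subset[of _ "Pow S"]) (use assms in \<open>auto dest: in_quotient_imp_subset\<close>)
  ultimately show ?thesis using assms by (simp add: Suc_le_eq card_gt_0_iff)
qed

lemma card_colorings:
  fixes S :: "nat set" and T :: "'b set"
  assumes eq: "equiv S R" and fin: "finite S" and finT: "finite T"
  shows "card {f \<in> S \<rightarrow>\<^sub>E T. \<forall>(i,j)\<in>R. f i = f j} = card T ^ card (S // R)"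
proof -
  let ?Q = "S // R"
  let ?W = "{f \<in> S \<rightarrow>\<^sub>E T. \<forall>(i,j)\<in>R. f i = f j}"
  define h where "h g = restrict (\<lambda>k. g (R `` {k})) S" for g :: "nat set \<Rightarrow> 'b"
  define rep where "rep c = (SOME k. k \<in> c)" for c :: "nat set"
  have rep: "c \<in> ?Q \<Longrightarrow> rep c \<in> c \<and> R `` {rep c} = c" for c
  proof -
    assume c: "c \<in> ?Q"
    then obtain k where k: "k \<in> S" "c = R `` {k}" by (auto elim: quotientE)
    then have "k \<in> c" using equiv_class_self[OF eq k(1)] by simp
    then have r: "rep c \<in> c" unfolding rep_def by (rule someI)
    then have "(k, rep c) \<in> R" using k by simp
    then have "R``{k} = R``{rep c}" by (rule equiv_class_eq[OF eq])
    then show ?thesis using k r by simp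
  qed
  have "bij_betw h (?Q \<rightarrow>\<^sub>E T) ?W"
  proof (rule bij_betwI')
    fix g1 g2 assume g: "g1 \<in> ?Q \<rightarrow>\<^sub>E T" "g2 \<in> ?Q \<rightarrow>\<^sub>E T"
    show "(h g1 = h g2) = (g1 = g2)"
    proof
      assume hh: "h g1 = h g2"
      show "g1 = g2"
      proof
        fix c show "g1 c = g2 c"
        proof (cases "c \<in> ?Q")
          case True
          then have "rep c \<in> S" using rep eq by (meson in_quotient_imp_subset subsetD)
          then have "h g1 (rep c) = g1 c" "h g2 (rep c) = g2 c" using rep[OF True] by (auto simp: h_def)
          then show ?thesis using hh by simp
        next
          case False then show ?thesis using g by (auto simp: PiE_def extensional_def)
        qed
      qed
    qed simp
  next
    fix g assume g: "g \<in> ?Q \<rightarrow>\<^sub>E T"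
    have 1: "h g \<in> S \<rightarrow>\<^sub>E T" using g by (auto simp: h_def quotientI)
    have "\<forall>(i,j)\<in>R. h g i = h g j"
    proof clarify
      fix i j assume ij: "(i,j) \<in> R"
      then have "i \<in> S" "j \<in> S" "R``{i} = R``{j}" using eq equiv_class_eq[OF eq ij]
        by (auto simp: equiv_def refl_on_def)
      then show "h g i = h g j" by (simp add: h_def)
    qed
    then show "h g \<in> ?W" using 1 by simp
  next
    fix f assume f: "f \<in> ?W"
    define g where "g = restrict (\<lambda>c. f (rep c)) ?Q"
    have "g \<in> ?Q \<rightarrow>\<^sub>E T" unfolding g_def
    proof (rule restrict_PiE_iff[THEN iffD2], intro ballI)
      fix c assume c: "c \<in> ?Q"
      then have "rep c \<in> S" using rep[OF c] in_quotient_imp_subset[OF eq c] by blast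
      then show "f (rep c) \<in> T" using f by auto
    qed
    moreover have "f = h g"
    proof
      fix k show "f k = h g k"
      proof (cases "k \<in> S")
        case True
        then have cQ: "R``{k} \<in> ?Q" by (simp add: quotientI)
        then have "rep (R``{k}) \<in> R``{k}" using rep by blast
        then have "(k, rep (R``{k})) \<in> R" by simp
        then have "f k = f (rep (R``{k}))" using f by auto
        then show ?thesis using True cQ by (simp add: h_def g_def)
      next
        case False then show ?thesis using f by (auto simp: h_def)
      qed
    qed
    ultimately show "\<exists>g \<in> ?Q \<rightarrow>\<^sub>E T. f = h g" by blast
  qed
  then have "card ?W = card (?Q \<rightarrow>\<^sub>E T)" by (simp add: bij_betw_same_card)
  also have "\<dots> = card T ^ card ?Q"
  proof -
    have "finite ?Q"
      by (rule finite_subset[of _ "Pow S"]) (use eq fin in \<open>auto dest: in_quotient_imp_subset\<close>)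
    then show ?thesis by (simp add: card_PiE)
  qed
  finally show ?thesis .
qed


abbreviation hyp :: "nat \<Rightarrow> nat \<times> nat \<Rightarrow> (nat \<Rightarrow> real) set" where
  "hyp n \<equiv> (\<lambda>(i,j). hyperplane n i j)"

lemma compl_sub: "compl_ideal n I \<subseteq> {1..n} \<times> {1..n}"
  by (auto simp: compl_ideal_def posroots_def)

lemma compl_sub_pos: "compl_ideal n I \<subseteq> posroots n"
  by (auto simp: compl_ideal_def)

lemma finite_compl: "finite (compl_ideal n I)"
  using compl_sub by (rule finite_subset) simp

lemma hyp_inter:
  assumes "F \<subseteq> {1..n} \<times> {1..n}"
  shows "ambient n \<inter> \<Inter>(hyp n ` F) =
     {x. (\<forall>k. k \<notin> {1..n} \<longrightarrow> x k = 0) \<and> (\<forall>(i,j)\<in>grel {1..n} F. x i = x j)}"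
proof -
  have "ambient n \<inter> \<Inter>(hyp n ` F) = {x. (\<forall>k. k \<notin> {1..n} \<longrightarrow> x k = 0) \<and> (\<forall>(i,j)\<in>F. x i = x j)}"
    by (auto simp: ambient_def hyperplane_def)
  also have "\<dots> = {x. (\<forall>k. k \<notin> {1..n} \<longrightarrow> x k = 0) \<and> (\<forall>(i,j)\<in>grel {1..n} F. x i = x j)}"
    using const_iff_grel[of F _ "{1..n}"] by blast
  finally show ?thesis .
qed

lemma vdim_hyp:
  assumes "F \<subseteq> {1..n} \<times> {1..n}"
  shows "vdim (ambient n \<inter> \<Inter>(hyp n ` F)) = card ({1..n} // grel {1..n} F)"
  unfolding hyp_inter[OF assms] vdim_def
  by (rule dim_classes[OF grel_equiv[OF assms]]) simp

lemma inj_hyp: "inj_on (hyp n) (posroots n)"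
proof
  fix u v assume u: "u \<in> posroots n" and v: "v \<in> posroots n" and eq: "hyp n u = hyp n v"
  obtain i j where ij: "u = (i,j)" "1 \<le> i" "i < j" "j \<le> n" using u by (auto simp: posroots_def)
  obtain i' j' where ij': "v = (i',j')" "1 \<le> i'" "i' < j'" "j' \<le> n" using v by (auto simp: posroots_def)
  have key: "a \<in> {i',j'}" if "a \<in> {i,j}" for a
  proof (rule ccontr)
    assume na: "a \<notin> {i',j'}"
    define x where "x = (\<lambda>k. if k = a then 1 else (0::real))"
    have "x \<in> ambient n" using that ij by (auto simp: x_def ambient_def)
    then have "x \<in> hyp n v" using na by (simp add: ij' hyperplane_def x_def)
    moreover have "x \<notin> hyp n u" using that ij by (auto simp: hyperplane_def x_def)
    ultimately show False using eq by simp
  qed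
  have "i \<in> {i',j'}" "j \<in> {i',j'}" using key by auto
  then show "u = v" using ij ij' by auto
qed

lemma connected_full:
  assumes full: "is_full n I" and n: "n \<ge> 1"
  shows "card ({1..n} // grel {1..n} (compl_ideal n I)) = 1"
proof -
  let ?R = "grel {1..n} (compl_ideal n I)"
  have eq: "equiv {1..n} ?R" by (rule grel_equiv[OF compl_sub])
  have rel: "k \<in> {1..n} \<Longrightarrow> (1,k) \<in> ?R" for k
  proof (induction k)
    case 0 then show ?case by simp
  next
    case (Suc k)
    show ?case
    proof (cases "k = 0")
      case True then show ?thesis using n unfolding grel_def by auto
    next
      case False
      then have k: "k \<in> {1..<n}" using Suc.prems by auto
      then have "(1,k) \<in> ?R" using Suc.IH by auto
      moreover have "(k, Suc k) \<in> ?R" using full k F_sub_grel[of "compl_ideal n I" "{1..n}"]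
        unfolding is_full_def by auto
      ultimately show ?thesis unfolding grel_def by (rule trancl_trans)
    qed
  qed
  have "{1..n} // ?R = {?R `` {1}}"
  proof
    show "{1..n} // ?R \<subseteq> {?R `` {1}}"
    proof
      fix c assume "c \<in> {1..n} // ?R"
      then obtain k where k: "k \<in> {1..n}" "c = ?R `` {k}" by (auto elim: quotientE)
      have "?R `` {1} = ?R `` {k}" by (rule equiv_class_eq[OF eq rel[OF k(1)]])
      then show "c \<in> {?R `` {1}}" using k by simp
    qed
    show "{?R `` {1}} \<subseteq> {1..n} // ?R" using n by (auto intro: quotientI)
  qed
  then show ?thesis by simp
qed

lemma sum_pow_subsets:
  fixes x :: real
  assumes "finite M"
  shows "(\<Sum>F\<in>Pow M. x ^ card F) = (x + 1) ^ card M"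
proof -
  have "(\<Prod>e\<in>M. x + 1) = (\<Sum>F\<in>Pow M. (\<Prod>e\<in>F. x) * (\<Prod>e\<in>M - F. 1))"
    by (rule prod_add[OF assms])
  then show ?thesis by simp
qed

lemma lhs_reduce:
  assumes full: "is_full n I" and n: "n \<ge> 1" and p: "p \<ge> 1"
  shows "coboundary n (arrangement_of n I) (real p) t =
    (1 / real p) * (\<Sum>f\<in>{1..n} \<rightarrow>\<^sub>E {1..p}. t ^ card {(i,j)\<in>compl_ideal n I. f i = f j})"
proof -
  let ?S = "{1..n::nat}"
  let ?E = "compl_ideal n I"
  let ?W = "?S \<rightarrow>\<^sub>E {1..p}"
  let ?M = "\<lambda>f. {(i,j)\<in>?E. f i = f j}"
  define c where "c F = card (?S // grel ?S F)" for F
  have finE: "finite ?E" by (rule finite_compl)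
  have injE: "inj_on (hyp n) ?E" by (rule inj_on_subset[OF inj_hyp compl_sub_pos])
  have rank: "F \<subseteq> ?E \<Longrightarrow> arr_rank n (hyp n ` F) = n - c F" for F
  proof -
    assume "F \<subseteq> ?E"
    then have "F \<subseteq> ?S \<times> ?S" using compl_sub[of n I] by (rule subset_trans)
    then show ?thesis unfolding arr_rank_def c_def by (simp add: vdim_hyp)
  qed
  have cle: "F \<subseteq> ?E \<Longrightarrow> 1 \<le> c F \<and> c F \<le> n" for F
  proof -
    assume F: "F \<subseteq> ?E"
    then have FS: "F \<subseteq> ?S \<times> ?S" using compl_sub[of n I] by (rule subset_trans)
    show ?thesis unfolding c_def
      using card_quotient_le[OF grel_equiv[OF FS]] card_quotient_pos[OF grel_equiv[OF FS]] n by auto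
  qed
  have cE: "c ?E = 1" unfolding c_def by (rule connected_full[OF full n])
  have colcard: "F \<subseteq> ?E \<Longrightarrow> card {f \<in> ?W. F \<subseteq> ?M f} = p ^ c F" for F
  proof -
    assume F: "F \<subseteq> ?E"
    then have FS: "F \<subseteq> ?S \<times> ?S" using compl_sub[of n I] by (rule subset_trans)
    have "F \<subseteq> ?M f \<longleftrightarrow> (\<forall>(i,j)\<in>grel ?S F. f i = f j)" for f :: "nat \<Rightarrow> nat"
      using F const_iff_grel[of F f ?S] by auto
    then have "{f \<in> ?W. F \<subseteq> ?M f} = {f \<in> ?W. \<forall>(i,j)\<in>grel ?S F. f i = f j}"
      by simp
    then show ?thesis unfolding c_def using card_colorings[OF grel_equiv[OF FS], of "{1..p}"] by simp
  qed
  have "coboundary n (arrangement_of n I) (real p) t =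
     (\<Sum>B\<in>Pow (hyp n ` ?E). real p ^ (arr_rank n (hyp n ` ?E) - arr_rank n B) * (t - 1) ^ card B)"
    unfolding coboundary_def arrangement_of_def by (rule refl)
  also have "\<dots> = (\<Sum>F\<in>Pow ?E. real p ^ (arr_rank n (hyp n ` ?E) - arr_rank n (hyp n ` F)) * (t - 1) ^ card (hyp n ` F))"
  proof -
    have "Pow (hyp n ` ?E) = image (hyp n) ` Pow ?E" by (rule image_Pow_surj[symmetric]) (rule refl)
    moreover have "inj_on (image (hyp n)) (Pow ?E)" by (rule inj_on_image_Pow[OF injE])
    ultimately show ?thesis by (simp add: sum.reindex)
  qed
  also have "\<dots> = (\<Sum>F\<in>Pow ?E. (1 / real p) * (real p ^ c F * (t - 1) ^ card F))"
  proof (rule sum.cong[OF refl])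
    fix F assume F: "F \<in> Pow ?E"
    have cardF: "card (hyp n ` F) = card F" using F by (intro card_image inj_on_subset[OF injE]) auto
    have "arr_rank n (hyp n ` ?E) - arr_rank n (hyp n ` F) = c F - 1"
      using rank[of F] rank[of ?E] F cle[of F] cE by auto
    moreover have "real p ^ (c F - 1) = (1 / real p) * real p ^ c F"
      using cle[of F] F p by (cases "c F") auto
    ultimately show "real p ^ (arr_rank n (hyp n ` ?E) - arr_rank n (hyp n ` F)) * (t - 1) ^ card (hyp n ` F)
       = (1 / real p) * (real p ^ c F * (t - 1) ^ card F)" using cardF by simp
  qed
  also have "\<dots> = (1 / real p) * (\<Sum>F\<in>Pow ?E. real (card {f \<in> ?W. F \<subseteq> ?M f}) * (t - 1) ^ card F)"
    unfolding sum_distrib_left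
  proof (rule sum.cong[OF refl])
    fix F assume "F \<in> Pow ?E"
    then have "real (card {f \<in> ?W. F \<subseteq> ?M f}) = real p ^ c F" using colcard[of F] by simp
    then show "1 / real p * (real p ^ c F * (t - 1) ^ card F) =
        1 / real p * (real (card {f \<in> ?W. F \<subseteq> ?M f}) * (t - 1) ^ card F)" by simp
  qed
  also have "(\<Sum>F\<in>Pow ?E. real (card {f \<in> ?W. F \<subseteq> ?M f}) * (t - 1) ^ card F)
      = (\<Sum>F\<in>Pow ?E. \<Sum>f\<in>{f \<in> ?W. F \<subseteq> ?M f}. (t - 1) ^ card F)"
    by simp
  also have "\<dots> = (\<Sum>f\<in>?W. \<Sum>F\<in>{F \<in> Pow ?E. F \<subseteq> ?M f}. (t - 1) ^ card F)"
    by (rule sum.swap_restrict) (auto simp: finE finite_PiE)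
  also have "\<dots> = (\<Sum>f\<in>?W. t ^ card (?M f))"
  proof (rule sum.cong[OF refl])
    fix f
    have "{F \<in> Pow ?E. F \<subseteq> ?M f} = Pow (?M f)" by auto
    moreover have "finite (?M f)" using finE by (rule finite_subset[rotated]) auto
    ultimately show "(\<Sum>F\<in>{F \<in> Pow ?E. F \<subseteq> ?M f}. (t - 1) ^ card F) = t ^ card (?M f)"
      using sum_pow_subsets[of "?M f" "t - 1"] by simp
  qed
  finally show ?thesis .
qed


definition ext_col :: "nat set \<Rightarrow> nat set \<Rightarrow> nat \<Rightarrow> (nat \<Rightarrow> nat) \<Rightarrow> nat \<Rightarrow> nat" where
  "ext_col B T q h = (\<lambda>w. if w \<in> T then q else if w \<in> B then h w else undefined)"

lemma multi_count:
  fixes B :: "nat set" and p :: nat and a :: "nat \<Rightarrow> nat"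
  assumes "finite B" "(\<Sum>s\<in>{1..p}. a s) = card B"
  shows "card {g \<in> B \<rightarrow>\<^sub>E {1..p}. \<forall>s\<in>{1..p}. card {w\<in>B. g w = s} = a s} * (\<Prod>s\<in>{1..p}. fact (a s))
      = (fact (card B) :: nat)"
  using assms
proof (induction p arbitrary: B)
  case 0
  then have "B = {}" by simp
  then show ?case by simp
next
  case (Suc p)
  let ?A = "\<lambda>B. {g \<in> B \<rightarrow>\<^sub>E {1..p}. \<forall>s\<in>{1..p}. card {w\<in>B. g w = s} = a s}"
  let ?A' = "{g \<in> B \<rightarrow>\<^sub>E {1..Suc p}. \<forall>s\<in>{1..Suc p}. card {w\<in>B. g w = s} = a s}"
  let ?P = "\<Prod>s\<in>{1..p}. fact (a s) :: nat"
  define k where "k = a (Suc p)"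
  define m where "m = card B"
  let ?Ts = "{T. T \<subseteq> B \<and> card T = k}"
  have sumS: "(\<Sum>s\<in>{1..Suc p}. a s) = (\<Sum>s\<in>{1..p}. a s) + k"
    by (simp add: k_def)
  have km: "k \<le> m" using Suc.prems sumS m_def by linarith
  have IH: "T \<in> ?Ts \<Longrightarrow> card (?A (B - T)) * ?P = fact (m - k)" for T
  proof -
    assume T: "T \<in> ?Ts"
    have "finite (B - T)" using Suc.prems by simp
    moreover have "card (B - T) = m - k"
    proof -
      have "T \<subseteq> B" "card T = k" using T by auto
      moreover then have "finite T" using Suc.prems(1) finite_subset by blast
      ultimately show ?thesis using m_def by (simp add: card_Diff_subset)
    qed
    moreover have "(\<Sum>s\<in>{1..p}. a s) = m - k" using Suc.prems sumS m_def by linarith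
    ultimately show ?thesis using Suc.IH[of "B - T"] by simp
  qed
  have Ppos: "?P > 0" by (simp add: prod_pos)
  have eqA: "?A' = (\<Union>T\<in>?Ts. ext_col B T (Suc p) ` ?A (B - T))"
  proof
    show "?A' \<subseteq> (\<Union>T\<in>?Ts. ext_col B T (Suc p) ` ?A (B - T))"
    proof
      fix g assume g: "g \<in> ?A'"
      define T where "T = {w\<in>B. g w = Suc p}"
      define h where "h = restrict g (B - T)"
      have "T \<in> ?Ts" using g by (auto simp: T_def k_def)
      moreover have "h \<in> ?A (B - T)"
      proof -
        have "h \<in> (B - T) \<rightarrow>\<^sub>E {1..p}"
        proof (unfold h_def, rule restrict_PiE_iff[THEN iffD2], intro ballI)
          fix w assume "w \<in> B - T"
          then have "g w \<in> {1..Suc p}" "g w \<noteq> Suc p" using g by (auto simp: T_def)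
          then show "g w \<in> {1..p}" by auto
        qed
        moreover have "card {w\<in>B - T. h w = s} = a s" if s: "s \<in> {1..p}" for s
        proof -
          have "{w\<in>B - T. h w = s} = {w\<in>B. g w = s}" using s by (auto simp: h_def T_def)
          then show ?thesis using g s by auto
        qed
        ultimately show ?thesis by blast
      qed
      moreover have "g = ext_col B T (Suc p) h"
      proof
        fix w show "g w = ext_col B T (Suc p) h w"
          using g by (auto simp: ext_col_def h_def T_def PiE_def extensional_def)
      qed
      ultimately show "g \<in> (\<Union>T\<in>?Ts. ext_col B T (Suc p) ` ?A (B - T))" by blast
    qed
  next
    show "(\<Union>T\<in>?Ts. ext_col B T (Suc p) ` ?A (B - T)) \<subseteq> ?A'"
    proof (rule subsetI)
      fix g assume "g \<in> (\<Union>T\<in>?Ts. ext_col B T (Suc p) ` ?A (B - T))"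
      then obtain T h where T: "T \<subseteq> B" "card T = k" and h: "h \<in> ?A (B - T)"
        and gdef: "g = ext_col B T (Suc p) h" by blast
      let ?g = "ext_col B T (Suc p) h"
      have "?g \<in> B \<rightarrow>\<^sub>E {1..Suc p}" using T h by (auto simp: ext_col_def PiE_def Pi_def extensional_def)
      moreover have "card {w\<in>B. ?g w = s} = a s" if s: "s \<in> {1..Suc p}" for s
      proof (cases "s = Suc p")
        case True
        have "{w\<in>B. ?g w = s} = T" using T h True by (auto simp: ext_col_def PiE_def Pi_def)
        then show ?thesis using T True k_def by simp
      next
        case False
        then have s': "s \<in> {1..p}" using s by auto
        have "{w\<in>B. ?g w = s} = {w\<in>B - T. h w = s}" using T False by (auto simp: ext_col_def)
        then show ?thesis using h s' by auto
      qed
      ultimately show "g \<in> ?A'" using gdef by blast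
    qed
  qed
  have finTs: "finite ?Ts" using Suc.prems by simp
  have "card ?A' = (\<Sum>T\<in>?Ts. card (ext_col B T (Suc p) ` ?A (B - T)))"
    unfolding eqA
  proof (rule card_UN_disjoint[OF finTs])
    show "\<forall>T\<in>?Ts. finite (ext_col B T (Suc p) ` ?A (B - T))"
    proof
      fix T assume "T \<in> ?Ts"
      have "finite (B - T \<rightarrow>\<^sub>E {1..p})" using Suc.prems(1) by (intro finite_PiE) auto
      then have "finite (?A (B - T))" by (rule finite_subset[rotated]) auto
      then show "finite (ext_col B T (Suc p) ` ?A (B - T))" by simp
    qed
    show "\<forall>T1\<in>?Ts. \<forall>T2\<in>?Ts. T1 \<noteq> T2 \<longrightarrow>
       ext_col B T1 (Suc p) ` ?A (B - T1) \<inter> ext_col B T2 (Suc p) ` ?A (B - T2) = {}"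
    proof (intro ballI impI)
      fix T1 T2 assume T1: "T1 \<in> ?Ts" and T2: "T2 \<in> ?Ts" and ne: "T1 \<noteq> T2"
      have pre: "{w\<in>B. ext_col B T (Suc p) h w = Suc p} = T" if "T \<in> ?Ts" "h \<in> ?A (B - T)" for T h
        using that by (auto simp: ext_col_def PiE_def Pi_def)
      show "ext_col B T1 (Suc p) ` ?A (B - T1) \<inter> ext_col B T2 (Suc p) ` ?A (B - T2) = {}"
      proof (rule ccontr)
        assume "ext_col B T1 (Suc p) ` ?A (B - T1) \<inter> ext_col B T2 (Suc p) ` ?A (B - T2) \<noteq> {}"
        then obtain h1 h2 where "h1 \<in> ?A (B - T1)" "h2 \<in> ?A (B - T2)"
          "ext_col B T1 (Suc p) h1 = ext_col B T2 (Suc p) h2" by blast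
        then have "T1 = T2" using pre[OF T1, of h1] pre[OF T2, of h2] by simp
        then show False using ne by simp
      qed
    qed
  qed
  also have "\<dots> = (\<Sum>T\<in>?Ts. fact (m - k) div ?P)"
  proof (rule sum.cong[OF refl])
    fix T assume T: "T \<in> ?Ts"
    have "inj_on (ext_col B T (Suc p)) (?A (B - T))"
    proof
      fix h1 h2 assume h: "h1 \<in> ?A (B - T)" "h2 \<in> ?A (B - T)"
        and e: "ext_col B T (Suc p) h1 = ext_col B T (Suc p) h2"
      show "h1 = h2"
      proof
        fix w show "h1 w = h2 w"
        proof (cases "w \<in> B - T")
          case True then show ?thesis using fun_cong[OF e, of w] by (simp add: ext_col_def)
        next
          case False then show ?thesis using h by (auto simp: PiE_def extensional_def)
        qed
      qed
    qed
    then have "card (ext_col B T (Suc p) ` ?A (B - T)) = card (?A (B - T))" by (rule card_image)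
    also have "\<dots> = fact (m - k) div ?P"
    proof -
      have "fact (m - k) div ?P = card (?A (B - T)) * ?P div ?P" by (simp only: IH[OF T])
      also have "\<dots> = card (?A (B - T))" using Ppos by simp
      finally show ?thesis by simp
    qed
    finally show "card (ext_col B T (Suc p) ` ?A (B - T)) = fact (m - k) div ?P" .
  qed
  also have "\<dots> = (m choose k) * (fact (m - k) div ?P)"
    using n_subsets[OF Suc.prems(1), of k] m_def by simp
  finally have cA: "card ?A' = (m choose k) * (fact (m - k) div ?P)" .
  have dvd: "?P dvd fact (m - k)"
  proof -
    have "k \<le> card B" using km m_def by simp
    then obtain T where "T \<subseteq> B" "card T = k" by (rule obtain_subset_with_card_n)
    then have "T \<in> ?Ts" by simp
    from IH[OF this] have "fact (m - k) = card (?A (B - T)) * ?P" by simp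
    then show ?thesis by (simp only:) simp
  qed
  have "(\<Prod>s\<in>{1..Suc p}. fact (a s)) = ?P * fact k" by (simp add: k_def)
  then have "card ?A' * (\<Prod>s\<in>{1..Suc p}. fact (a s)) = (m choose k) * ((fact (m - k) div ?P) * ?P) * fact k"
    using cA by (simp add: algebra_simps)
  also have "\<dots> = (m choose k) * fact (m - k) * fact k" using dvd by simp
  also have "\<dots> = fact m" using binomial_fact_lemma[OF km] by (simp add: algebra_simps)
  finally show ?case by (simp add: m_def)
qed

lemma multinomial_eq:
  fixes B :: "nat set" and p :: nat and a :: "nat \<Rightarrow> nat"
  assumes "finite B" "(\<Sum>s\<in>{1..p}. a s) = card B"
  shows "multinomial p (card B) a = card {g \<in> B \<rightarrow>\<^sub>E {1..p}. \<forall>s\<in>{1..p}. card {w\<in>B. g w = s} = a s}"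
proof -
  have "(\<Prod>s\<in>{1..p}. fact (a s) :: nat) > 0" by (simp add: prod_pos)
  then show ?thesis unfolding multinomial_def by (simp only: multi_count[OF assms, symmetric]) simp
qed


lemma class_of_mem:
  assumes eq: "equiv S R" and B: "B \<in> S // R" and w: "w \<in> B"
  shows "R `` {w} = B"
proof -
  obtain a where a: "a \<in> S" "B = R `` {a}" using B by (auto elim: quotientE)
  then have "(a, w) \<in> R" using w by simp
  then have "R `` {a} = R `` {w}" by (rule equiv_class_eq[OF eq])
  then show ?thesis using a by simp
qed

lemma card_split:
  fixes S :: "nat set" and T :: "'b set" and P :: "nat set \<Rightarrow> (nat \<Rightarrow> 'b) \<Rightarrow> bool"
  assumes eq: "equiv S R" and fin: "finite S"
  shows "card {f \<in> S \<rightarrow>\<^sub>E T. \<forall>B\<in>S//R. P B (restrict f B)} = (\<Prod>B\<in>S//R. card {g \<in> B \<rightarrow>\<^sub>E T. P B g})"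
proof -
  let ?Q = "S // R"
  let ?L = "{f \<in> S \<rightarrow>\<^sub>E T. \<forall>B\<in>?Q. P B (restrict f B)}"
  let ?Rt = "\<Pi>\<^sub>E B\<in>?Q. {g \<in> B \<rightarrow>\<^sub>E T. P B g}"
  have finQ: "finite ?Q"
    by (rule finite_subset[of _ "Pow S"]) (use eq fin in \<open>auto dest: in_quotient_imp_subset\<close>)
  have sub: "B \<in> ?Q \<Longrightarrow> B \<subseteq> S" for B using eq by (rule in_quotient_imp_subset)
  have kQ: "k \<in> S \<Longrightarrow> R `` {k} \<in> ?Q \<and> k \<in> R `` {k}" for k
    using equiv_class_self[OF eq] by (auto intro: quotientI)
  have "bij_betw (\<lambda>f. \<lambda>B\<in>?Q. restrict f B) ?L ?Rt"
  proof (rule bij_betwI')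
    fix f1 f2 assume f: "f1 \<in> ?L" "f2 \<in> ?L"
    show "((\<lambda>B\<in>?Q. restrict f1 B) = (\<lambda>B\<in>?Q. restrict f2 B)) = (f1 = f2)"
    proof
      assume e: "(\<lambda>B\<in>?Q. restrict f1 B) = (\<lambda>B\<in>?Q. restrict f2 B)"
      show "f1 = f2"
      proof
        fix k show "f1 k = f2 k"
        proof (cases "k \<in> S")
          case True
          then have "R `` {k} \<in> ?Q" "k \<in> R `` {k}" using kQ by auto
          then show ?thesis using fun_cong[OF fun_cong[OF e, of "R `` {k}"], of k] by simp
        next
          case False then show ?thesis using f by (auto simp: PiE_def extensional_def)
        qed
      qed
    qed simp
  next
    fix f assume f: "f \<in> ?L"
    show "(\<lambda>B\<in>?Q. restrict f B) \<in> ?Rt"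
    proof (rule restrict_PiE_iff[THEN iffD2], intro ballI)
      fix B assume B: "B \<in> ?Q"
      have "restrict f B \<in> B \<rightarrow>\<^sub>E T" using f sub[OF B] by auto
      then show "restrict f B \<in> {g \<in> B \<rightarrow>\<^sub>E T. P B g}" using f B by auto
    qed
  next
    fix F assume F: "F \<in> ?Rt"
    define f where "f = (\<lambda>k. if k \<in> S then F (R `` {k}) k else undefined)"
    have rf: "restrict f B = F B" if B: "B \<in> ?Q" for B
    proof
      fix w show "restrict f B w = F B w"
      proof (cases "w \<in> B")
        case True
        then have "R `` {w} = B" by (rule class_of_mem[OF eq B])
        then show ?thesis using True sub[OF B] by (auto simp: f_def)
      next
        case False
        have "F B \<in> B \<rightarrow>\<^sub>E T" using PiE_mem[OF F B] by blast
        then show ?thesis using False by (auto simp: PiE_def extensional_def)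
      qed
    qed
    have "f \<in> S \<rightarrow>\<^sub>E T"
    proof (rule PiE_I)
      fix k assume k: "k \<in> S"
      then have "R `` {k} \<in> ?Q" "k \<in> R `` {k}" using kQ by auto
      moreover then have "F (R `` {k}) \<in> R `` {k} \<rightarrow>\<^sub>E T" using PiE_mem[OF F] by blast
      ultimately show "f k \<in> T" using k by (auto simp: f_def)
    next
      fix k assume "k \<notin> S" then show "f k = undefined" by (simp add: f_def)
    qed
    moreover have "\<forall>B\<in>?Q. P B (restrict f B)" using F rf by auto
    moreover have "F = (\<lambda>B\<in>?Q. restrict f B)"
    proof
      fix B show "F B = (\<lambda>B\<in>?Q. restrict f B) B"
        using rf F by (cases "B \<in> ?Q") (auto simp: PiE_def extensional_def)
    qed
    ultimately show "\<exists>f\<in>?L. F = (\<lambda>B\<in>?Q. restrict f B)" by blast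
  qed
  then have "card ?L = card ?Rt" by (rule bij_betw_same_card)
  also have "\<dots> = (\<Prod>B\<in>?Q. card {g \<in> B \<rightarrow>\<^sub>E T. P B g})" using finQ by (simp add: card_PiE)
  finally show ?thesis .
qed


lemma root_le_trans: "root_le u v \<Longrightarrow> root_le v w \<Longrightarrow> root_le u w"
  by (auto simp: root_le_def)

lemma max_above:
  assumes u: "u \<in> compl_ideal n I"
  shows "\<exists>v\<in>max_compl n I. root_le u v"
proof -
  let ?E = "compl_ideal n I"
  let ?U = "{v\<in>?E. root_le u v}"
  let ?len = "\<lambda>v::nat\<times>nat. snd v - fst v"
  have finU: "finite ?U" using finite_compl[of n I] by (rule finite_subset[rotated]) auto
  have uU: "u \<in> ?U" using u by (simp add: root_le_def)
  then have ne: "?len ` ?U \<noteq> {}" by blast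
  have "Max (?len ` ?U) \<in> ?len ` ?U" using finU ne by (intro Max_in) auto
  then obtain v where v: "v \<in> ?U" "?len v = Max (?len ` ?U)" by auto
  have "v \<in> max_compl n I"
    unfolding max_compl_def
  proof (intro CollectI conjI ballI impI)
    show "v \<in> ?E" using v by simp
    fix w assume w: "w \<in> ?E" "root_le v w"
    then have "w \<in> ?U" using v root_le_trans by blast
    then have "?len w \<le> ?len v" using v finU by simp
    moreover have "fst v < snd v" using v by (auto simp: compl_ideal_def posroots_def)
    ultimately show "w = v" using w(2) by (cases v, cases w) (auto simp: root_le_def)
  qed
  then show ?thesis using v by blast
qed

lemma max_in_compl: "max_compl n I \<subseteq> compl_ideal n I"
  by (auto simp: max_compl_def)

lemma E_char:
  assumes ideal: "is_ideal n I"
  shows "(i,j) \<in> compl_ideal n I \<longleftrightarrow> (i,j) \<in> posroots n \<and> signature n I i \<inter> signature n I j \<noteq> {}"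
proof
  assume ij: "(i,j) \<in> compl_ideal n I"
  then obtain v where v: "v \<in> max_compl n I" "root_le (i,j) v" using max_above by blast
  have "i < j" using ij by (auto simp: compl_ideal_def posroots_def)
  then have "v \<in> signature n I i \<inter> signature n I j" using v
    by (cases v) (auto simp: signature_def root_le_def)
  then show "(i,j) \<in> posroots n \<and> signature n I i \<inter> signature n I j \<noteq> {}"
    using ij by (auto simp: compl_ideal_def)
next
  assume a: "(i,j) \<in> posroots n \<and> signature n I i \<inter> signature n I j \<noteq> {}"
  then obtain a b where ab: "(a,b) \<in> max_compl n I" "a \<le> i" "i \<le> b" "a \<le> j" "j \<le> b"
    by (auto simp: signature_def)
  have abE: "(a,b) \<in> compl_ideal n I" using ab max_in_compl by blast
  show "(i,j) \<in> compl_ideal n I"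
  proof (rule ccontr)
    assume "(i,j) \<notin> compl_ideal n I"
    then have "(i,j) \<in> I" using a by (simp add: compl_ideal_def)
    moreover have "root_le (i,j) (a,b)" using ab by (simp add: root_le_def)
    moreover have "(a,b) \<in> posroots n" using abE by (simp add: compl_ideal_def)
    ultimately have "(a,b) \<in> I" using ideal unfolding is_ideal_def by blast
    then show False using abE by (simp add: compl_ideal_def)
  qed
qed

lemma sig_ne:
  assumes n: "n \<ge> 2" and full: "is_full n I" and w: "w \<in> {1..n}"
  shows "signature n I w \<noteq> {}"
proof -
  obtain u where u: "u \<in> compl_ideal n I" "fst u \<le> w" "w \<le> snd u"
  proof (cases "w < n")
    case True
    then have "(w, w+1) \<in> compl_ideal n I" using full w unfolding is_full_def by auto
    then show ?thesis using that by fastforce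
  next
    case False
    then have "w = n" using w by auto
    moreover have "(n-1, n-1+1) \<in> compl_ideal n I"
    proof -
      have "n - 1 \<in> {1..<n}" using n by auto
      then show ?thesis using full unfolding is_full_def by blast
    qed
    ultimately show ?thesis using that n by fastforce
  qed
  then obtain v where v: "v \<in> max_compl n I" "root_le u v" using max_above by blast
  then have "v \<in> signature n I w" using u by (cases v, cases u) (auto simp: signature_def root_le_def)
  then show ?thesis by blast
qed

lemma sig_convex:
  assumes n: "n \<ge> 2" and full: "is_full n I"
    and m: "m \<in> {1..n}" and mi: "m \<le> i" and ij: "i \<le> j" and jn: "j \<le> n"
    and eq: "signature n I m = signature n I j"
  shows "signature n I i = signature n I m"
proof
  show "signature n I m \<subseteq> signature n I i"
  proof
    fix v assume v: "v \<in> signature n I m"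
    then have "v \<in> signature n I j" using eq by simp
    then show "v \<in> signature n I i" using v mi ij by (auto simp: signature_def)
  qed
next
  show "signature n I i \<subseteq> signature n I m"
  proof
    fix v assume v: "v \<in> signature n I i"
    obtain a b where ab: "v = (a,b)" "v \<in> max_compl n I" "a \<le> i" "i \<le> b"
      using v by (cases v) (auto simp: signature_def)
    obtain cd where cd: "cd \<in> signature n I m" using sig_ne[OF n full m] by blast
    obtain c d where cd': "cd = (c,d)" "c \<le> m" "m \<le> d" "c \<le> j" "j \<le> d" "cd \<in> max_compl n I"
      using cd eq by (cases cd) (auto simp: signature_def)
    show "v \<in> signature n I m"
    proof (cases "a \<le> m")
      case True then show ?thesis using ab mi by (auto simp: signature_def)
    next
      case False
      show ?thesis
      proof (cases "j \<le> b")
        case True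
        then have "v \<in> signature n I j" using ab ij by (auto simp: signature_def)
        then have "v \<in> signature n I m" using eq by simp
        then have "a \<le> m" using ab by (auto simp: signature_def)
        then show ?thesis using False by simp
      next
        case False2: False
        have "root_le v cd" using ab cd' False False2 by (simp add: root_le_def)
        moreover have "cd \<in> compl_ideal n I" using cd' max_in_compl by blast
        ultimately have "cd = v" using ab(2) unfolding max_compl_def by blast
        then show ?thesis using cd by simp
      qed
    qed
  qed
qed


definition Rs :: "nat \<Rightarrow> (nat \<times> nat) set \<Rightarrow> (nat \<times> nat) set" where
  "Rs n I = {(w,w'). w \<in> {1..n} \<and> w' \<in> {1..n} \<and> signature n I w = signature n I w'}"

lemma Rs_equiv: "equiv {1..n} (Rs n I)"
  unfolding equiv_def refl_on_def sym_def trans_def Rs_def by auto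

lemma blocks_quot: "blocks n I = {1..n} // Rs n I"
  unfolding blocks_def quotient_def Rs_def by auto

lemma block_props:
  assumes B: "B \<in> blocks n I"
  shows "B \<subseteq> {1..n}" "B \<noteq> {}" "finite B"
    "\<And>w w'. w \<in> B \<Longrightarrow> w' \<in> B \<Longrightarrow> signature n I w = signature n I w'"
    "\<And>w w'. w \<in> B \<Longrightarrow> w' \<in> {1..n} \<Longrightarrow> signature n I w' = signature n I w \<Longrightarrow> w' \<in> B"
    "\<And>w. w \<in> B \<Longrightarrow> block_sig n I B = signature n I w"
proof -
  obtain a where a: "a \<in> {1..n}" "B = {w' \<in> {1..n}. signature n I w' = signature n I a}"
    using B unfolding blocks_def by auto
  show 1: "B \<subseteq> {1..n}" using a by auto
  show 2: "B \<noteq> {}" using a by auto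
  show 3: "finite B" using 1 finite_subset by blast
  show 4: "\<And>w w'. w \<in> B \<Longrightarrow> w' \<in> B \<Longrightarrow> signature n I w = signature n I w'" using a by auto
  show "\<And>w w'. w \<in> B \<Longrightarrow> w' \<in> {1..n} \<Longrightarrow> signature n I w' = signature n I w \<Longrightarrow> w' \<in> B"
    using a by auto
  have "Min B \<in> B" using 2 3 by simp
  then show "\<And>w. w \<in> B \<Longrightarrow> block_sig n I B = signature n I w"
    unfolding block_sig_def using 4 by blast
qed

lemma blocks_disj:
  assumes "B \<in> blocks n I" "C \<in> blocks n I" "B \<noteq> C"
  shows "B \<inter> C = {}"
  using assms quotient_disj[OF Rs_equiv, of B n I C] unfolding blocks_quot by blast

lemma finite_blocks: "finite (blocks n I)"
  unfolding blocks_def by simp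

lemma block_of:
  assumes "w \<in> {1..n}"
  shows "\<exists>B\<in>blocks n I. w \<in> B"
  using assms unfolding blocks_def by auto

lemma block_order:
  assumes n: "n \<ge> 2" and full: "is_full n I"
    and B: "B \<in> blocks n I" and C: "C \<in> blocks n I" and ne: "B \<noteq> C"
    and i: "i \<in> B" and j: "j \<in> C" and ij: "i < j"
  shows "Min B < Min C"
proof (rule ccontr)
  assume "\<not> Min B < Min C"
  then have le: "Min C \<le> Min B" by simp
  have mC: "Min C \<in> C" using block_props(2,3)[OF C] by simp
  have mB: "Min B \<in> B" using block_props(2,3)[OF B] by simp
  have "Min C \<noteq> Min B" using blocks_disj[OF B C ne] mC mB by auto
  then have lt: "Min C < Min B" using le by simp
  have "Min B \<le> i" using block_props(3)[OF B] i by simp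
  have mS: "Min C \<in> {1..n}" using block_props(1)[OF C] mC by auto
  have jn: "j \<le> n" using block_props(1)[OF C] j by auto
  have "signature n I (Min C) = signature n I j" using block_props(4)[OF C mC j] .
  moreover have "Min C \<le> i" using lt \<open>Min B \<le> i\<close> by simp
  moreover have "i \<le> j" using ij by simp
  ultimately have "signature n I i = signature n I (Min C)"
    using sig_convex[OF n full mS] jn by blast
  moreover have "i \<in> {1..n}" using block_props(1)[OF B] i by auto
  ultimately have "i \<in> C" using block_props(5)[OF C mC] by blast
  then show False using blocks_disj[OF B C ne] i by auto
qed

definition PW :: "nat set \<Rightarrow> (nat \<times> nat) set" where
  "PW X = {(i,j). i \<in> X \<and> j \<in> X \<and> i < j}"

lemma card_PW:
  assumes "finite X"
  shows "card (PW X) = card X choose 2"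
proof -
  have "bij_betw (\<lambda>(i,j). {i,j}) (PW X) {T. T \<subseteq> X \<and> card T = 2}"
  proof (rule bij_betwI')
    fix u v assume "u \<in> PW X" "v \<in> PW X"
    then show "((case u of (i,j) \<Rightarrow> {i,j}) = (case v of (i,j) \<Rightarrow> {i,j})) = (u = v)"
      by (cases u, cases v) (auto simp: PW_def doubleton_eq_iff)
  next
    fix u assume "u \<in> PW X"
    then show "(case u of (i,j) \<Rightarrow> {i,j}) \<in> {T. T \<subseteq> X \<and> card T = 2}"
      by (cases u) (auto simp: PW_def)
  next
    fix T assume "T \<in> {T. T \<subseteq> X \<and> card T = 2}"
    then obtain a b where ab: "T = {a,b}" "a \<noteq> b" "T \<subseteq> X" by (auto simp: card_2_iff)
    then have "(min a b, max a b) \<in> PW X" by (auto simp: PW_def min_def max_def)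
    moreover have "T = (case (min a b, max a b) of (i,j) \<Rightarrow> {i,j})" using ab by (auto simp: min_def max_def)
    ultimately show "\<exists>u\<in>PW X. T = (case u of (i,j) \<Rightarrow> {i,j})" by blast
  qed
  then have "card (PW X) = card {T. T \<subseteq> X \<and> card T = 2}" by (rule bij_betw_same_card)
  also have "\<dots> = card X choose 2" by (rule n_subsets[OF assms])
  finally show ?thesis .
qed


lemma later_sub: "later_blocks n I B \<subseteq> blocks n I"
  by (auto simp: later_blocks_def)

lemma mono_count:
  fixes p :: nat and f :: "nat \<Rightarrow> nat"
  assumes n: "n \<ge> 2" and ideal: "is_ideal n I" and full: "is_full n I"
    and f: "f \<in> {1..n} \<rightarrow>\<^sub>E {1..p}"
  shows "card {(i,j)\<in>compl_ideal n I. f i = f j} =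
    (\<Sum>s\<in>{1..p}. \<Sum>B\<in>blocks n I. (card {w\<in>B. f w = s} choose 2) +
        card {w\<in>B. f w = s} * (\<Sum>C\<in>later_blocks n I B. card {w\<in>C. f w = s}))"
proof -
  let ?E = "compl_ideal n I"
  let ?bl = "blocks n I"
  define X where "X B s = {w\<in>B. f w = s}" for B s
  define M where "M s = {(i,j)\<in>?E. f i = s \<and> f j = s}" for s
  define U where "U s B = PW (X B s) \<union> (\<Union>C\<in>later_blocks n I B. X B s \<times> X C s)" for s B
  have finE: "finite ?E" by (rule finite_compl)
  have finX: "B \<in> ?bl \<Longrightarrow> finite (X B s)" for B s
    using block_props(3) unfolding X_def by auto
  have finL: "finite (later_blocks n I B)" for B
    using finite_blocks later_sub by (rule finite_subset[rotated])
  have ES: "(i,j) \<in> ?E \<Longrightarrow> i \<in> {1..n} \<and> j \<in> {1..n} \<and> i < j" for i j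
    by (auto simp: compl_ideal_def posroots_def)
  have A: "{(i,j)\<in>?E. f i = f j} = (\<Union>s\<in>{1..p}. M s)"
  proof
    show "{(i,j)\<in>?E. f i = f j} \<subseteq> (\<Union>s\<in>{1..p}. M s)"
    proof clarify
      fix i j assume ij: "(i,j) \<in> ?E" "f i = f j"
      then have "f i \<in> {1..p}" using ES[OF ij(1)] f by auto
      then show "(i,j) \<in> (\<Union>s\<in>{1..p}. M s)" using ij by (auto simp: M_def)
    qed
    show "(\<Union>s\<in>{1..p}. M s) \<subseteq> {(i,j)\<in>?E. f i = f j}" by (auto simp: M_def)
  qed
  have cardA: "card {(i,j)\<in>?E. f i = f j} = (\<Sum>s\<in>{1..p}. card (M s))"
    unfolding A
  proof (rule card_UN_disjoint)
    show "\<forall>s\<in>{1..p}. finite (M s)" using finE by (auto simp: M_def intro: finite_subset[rotated])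
    show "\<forall>s\<in>{1..p}. \<forall>s'\<in>{1..p}. s \<noteq> s' \<longrightarrow> M s \<inter> M s' = {}" by (auto simp: M_def)
  qed simp
  have B: "M s = (\<Union>B\<in>?bl. U s B)" for s
  proof
    show "M s \<subseteq> (\<Union>B\<in>?bl. U s B)"
    proof clarify
      fix i j assume ij: "(i,j) \<in> M s"
      then have E: "(i,j) \<in> ?E" and fi: "f i = s" and fj: "f j = s" by (auto simp: M_def)
      have iS: "i \<in> {1..n}" and jS: "j \<in> {1..n}" and lt: "i < j" using ES[OF E] by auto
      obtain Bi where Bi: "Bi \<in> ?bl" "i \<in> Bi" using block_of[OF iS] by blast
      obtain Cj where Cj: "Cj \<in> ?bl" "j \<in> Cj" using block_of[OF jS] by blast
      have "(i,j) \<in> U s Bi"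
      proof (cases "Bi = Cj")
        case True
        then show ?thesis using Bi Cj lt fi fj by (auto simp: U_def PW_def X_def)
      next
        case False
        have "Min Bi < Min Cj" by (rule block_order[OF n full Bi(1) Cj(1) False Bi(2) Cj(2) lt])
        moreover have "signature n I i \<inter> signature n I j \<noteq> {}" using E_char[OF ideal] E by blast
        then have "block_sig n I Bi \<inter> block_sig n I Cj \<noteq> {}"
          using block_props(6)[OF Bi(1) Bi(2)] block_props(6)[OF Cj(1) Cj(2)] by simp
        ultimately have "Cj \<in> later_blocks n I Bi" using Cj by (auto simp: later_blocks_def)
        then show ?thesis using Bi Cj fi fj by (auto simp: U_def X_def)
      qed
      then show "(i,j) \<in> (\<Union>B\<in>?bl. U s B)" using Bi by blast
    qed
  next
    show "(\<Union>B\<in>?bl. U s B) \<subseteq> M s"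
    proof clarify
      fix B i j assume Bb: "B \<in> ?bl" and ij: "(i,j) \<in> U s B"
      show "(i,j) \<in> M s"
      proof (cases "(i,j) \<in> PW (X B s)")
        case True
        then have i: "i \<in> B" "f i = s" and j: "j \<in> B" "f j = s" and lt: "i < j"
          by (auto simp: PW_def X_def)
        have iS: "i \<in> {1..n}" "j \<in> {1..n}" using block_props(1)[OF Bb] i j by auto
        have "signature n I i = signature n I j" using block_props(4)[OF Bb i(1) j(1)] .
        moreover have "signature n I i \<noteq> {}" using sig_ne[OF n full iS(1)] .
        ultimately have "signature n I i \<inter> signature n I j \<noteq> {}" by simp
        moreover have "(i,j) \<in> posroots n" using iS lt by (auto simp: posroots_def)
        ultimately have "(i,j) \<in> ?E" using E_char[OF ideal] by blast
        then show ?thesis using i j by (simp add: M_def)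
      next
        case False
        then obtain C where C: "C \<in> later_blocks n I B" and i: "i \<in> B" "f i = s"
          and j: "j \<in> C" "f j = s"
          using ij by (auto simp: U_def X_def)
        have Cb: "C \<in> ?bl" and mlt: "Min B < Min C"
          and sigs: "block_sig n I B \<inter> block_sig n I C \<noteq> {}" using C by (auto simp: later_blocks_def)
        have ne: "B \<noteq> C" using mlt by auto
        have iS: "i \<in> {1..n}" "j \<in> {1..n}" using block_props(1)[OF Bb] block_props(1)[OF Cb] i j by auto
        have "i \<noteq> j" using blocks_disj[OF Bb Cb ne] i j by auto
        moreover have "\<not> j < i"
        proof
          assume "j < i"
          then have "Min C < Min B" using block_order[OF n full Cb Bb ne[symmetric] j(1) i(1)] by simp
          then show False using mlt by simp
        qed
        ultimately have lt: "i < j" by simp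
        have "signature n I i \<inter> signature n I j \<noteq> {}"
          using sigs block_props(6)[OF Bb i(1)] block_props(6)[OF Cb j(1)] by simp
        moreover have "(i,j) \<in> posroots n" using iS lt by (auto simp: posroots_def)
        ultimately have "(i,j) \<in> ?E" using E_char[OF ideal] by blast
        then show ?thesis using i j by (simp add: M_def)
      qed
    qed
  qed
  have fst_U: "(i,j) \<in> U s B \<Longrightarrow> i \<in> B" for i j s B
    by (auto simp: U_def PW_def X_def)
  have cardB: "card (M s) = (\<Sum>B\<in>?bl. card (U s B))" for s
    unfolding B
  proof (rule card_UN_disjoint[OF finite_blocks])
    show "\<forall>B\<in>?bl. finite (U s B)"
    proof
      fix B assume Bb: "B \<in> ?bl"
      have "PW (X B s) \<subseteq> X B s \<times> X B s" by (auto simp: PW_def)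
      then have "finite (PW (X B s))" using finX[OF Bb] by (meson finite_SigmaI finite_subset)
      moreover have "finite (\<Union>C\<in>later_blocks n I B. X B s \<times> X C s)"
        using finL finX later_sub Bb by blast
      ultimately show "finite (U s B)" by (simp add: U_def)
    qed
    show "\<forall>B\<in>?bl. \<forall>C\<in>?bl. B \<noteq> C \<longrightarrow> U s B \<inter> U s C = {}"
    proof (intro ballI impI)
      fix B C assume "B \<in> ?bl" "C \<in> ?bl" "B \<noteq> C"
      then have "B \<inter> C = {}" by (rule blocks_disj)
      show "U s B \<inter> U s C = {}"
      proof (rule ccontr)
        assume "U s B \<inter> U s C \<noteq> {}"
        then obtain x where x: "x \<in> U s B" "x \<in> U s C" by blast
        obtain i j where "x = (i,j)" by (cases x)
        then have "i \<in> B" "i \<in> C" using x fst_U by auto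
        then show False using \<open>B \<inter> C = {}\<close> by blast
      qed
    qed
  qed
  have cardC: "card (U s B) = (card (X B s) choose 2) + card (X B s) * (\<Sum>C\<in>later_blocks n I B. card (X C s))"
    if Bb: "B \<in> ?bl" for s B
  proof -
    have finPW: "finite (PW (X B s))"
    proof -
      have "PW (X B s) \<subseteq> X B s \<times> X B s" by (auto simp: PW_def)
      then show ?thesis using finX[OF Bb] by (meson finite_SigmaI finite_subset)
    qed
    have finXC: "\<forall>C\<in>later_blocks n I B. finite (X B s \<times> X C s)"
      using finX later_sub Bb by blast
    have "card (U s B) = card (PW (X B s)) + card (\<Union>C\<in>later_blocks n I B. X B s \<times> X C s)"
      unfolding U_def
    proof (rule card_Un_disjoint[OF finPW])
      show "finite (\<Union>C\<in>later_blocks n I B. X B s \<times> X C s)" using finL finXC by blast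
      show "PW (X B s) \<inter> (\<Union>C\<in>later_blocks n I B. X B s \<times> X C s) = {}"
      proof (rule ccontr)
        assume "PW (X B s) \<inter> (\<Union>C\<in>later_blocks n I B. X B s \<times> X C s) \<noteq> {}"
        then obtain i j C where ij: "(i,j) \<in> PW (X B s)" and C: "C \<in> later_blocks n I B" "j \<in> X C s"
          by blast
        have "j \<in> B" using ij by (auto simp: PW_def X_def)
        moreover have "j \<in> C" using C by (auto simp: X_def)
        moreover have "C \<in> ?bl" "B \<noteq> C" using C by (auto simp: later_blocks_def)
        ultimately show False using blocks_disj[OF Bb] by blast
      qed
    qed
    also have "card (\<Union>C\<in>later_blocks n I B. X B s \<times> X C s) = (\<Sum>C\<in>later_blocks n I B. card (X B s \<times> X C s))"
    proof (rule card_UN_disjoint[OF finL finXC])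
      show "\<forall>C\<in>later_blocks n I B. \<forall>C'\<in>later_blocks n I B. C \<noteq> C' \<longrightarrow> (X B s \<times> X C s) \<inter> (X B s \<times> X C' s) = {}"
      proof (intro ballI impI)
        fix C C' assume "C \<in> later_blocks n I B" "C' \<in> later_blocks n I B" "C \<noteq> C'"
        then have "C \<inter> C' = {}" using blocks_disj later_sub by blast
        then show "(X B s \<times> X C s) \<inter> (X B s \<times> X C' s) = {}" by (auto simp: X_def)
      qed
    qed
    also have "\<dots> = (\<Sum>C\<in>later_blocks n I B. card (X B s) * card (X C s))"
      by (simp add: card_cartesian_product)
    also have "\<dots> = card (X B s) * (\<Sum>C\<in>later_blocks n I B. card (X C s))"
      by (simp add: sum_distrib_left)
    finally show ?thesis using card_PW[OF finX[OF Bb]] by simp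
  qed
  show ?thesis unfolding cardA cardB using cardC by (simp add: X_def)
qed


lemma card_fibers:
  fixes f :: "nat \<Rightarrow> nat" and B :: "nat set"
  assumes "finite B" "f ` B \<subseteq> {1..p}"
  shows "(\<Sum>s\<in>{1..p}. card {w\<in>B. f w = s}) = card B"
proof -
  have "(\<Sum>s\<in>{1..p}. \<Sum>w\<in>{w\<in>B. f w = s}. (1::nat)) = (\<Sum>w\<in>B. 1)"
    by (rule sum.group) (use assms in auto)
  then show ?thesis by simp
qed

lemma rhs_count:
  fixes p :: nat and t :: real
  assumes n: "n \<ge> 2" and ideal: "is_ideal n I" and full: "is_full n I"
  shows "(\<Sum>f\<in>{1..n} \<rightarrow>\<^sub>E {1..p}. t ^ card {(i,j)\<in>compl_ideal n I. f i = f j}) =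
    (\<Sum>a\<in>families n I p. real (\<Prod>B\<in>blocks n I. multinomial p (card B) (a B)) * t ^ exponent n I p a)"
proof -
  let ?W = "{1..n} \<rightarrow>\<^sub>E {1..p}"
  let ?bl = "blocks n I"
  define cnt where "cnt f = (\<lambda>B\<in>?bl. \<lambda>s\<in>{1..p}. card {w\<in>B. f w = s})" for f :: "nat \<Rightarrow> nat"
  have rs: "{w\<in>B. restrict g B w = s} = {w\<in>B. g w = s}" for g :: "nat \<Rightarrow> nat" and B s by auto
  have finW: "finite ?W" by (intro finite_PiE) auto
  have finFam: "finite (families n I p)"
    unfolding families_def
  proof (intro finite_PiE finite_blocks)
    fix B :: "nat set"
    have "finite ({1..p} \<rightarrow>\<^sub>E {0..card B})" by (intro finite_PiE) auto
    then show "finite {g \<in> {1..p} \<rightarrow>\<^sub>E {0..card B}. (\<Sum>s\<in>{1..p}. g s) = card B}" by simp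
  qed
  have img: "f \<in> ?W \<Longrightarrow> B \<in> ?bl \<Longrightarrow> f ` B \<subseteq> {1..p}" for f B
  proof -
    assume f: "f \<in> ?W" and B: "B \<in> ?bl"
    have "B \<subseteq> {1..n}" by (rule block_props(1)[OF B])
    then show "f ` B \<subseteq> {1..p}" using f by (auto simp: PiE_def Pi_def)
  qed
  have cntF: "cnt f \<in> families n I p" if f: "f \<in> ?W" for f
    unfolding families_def cnt_def
  proof (rule restrict_PiE_iff[THEN iffD2], intro ballI)
    fix B assume B: "B \<in> ?bl"
    have "(\<lambda>s\<in>{1..p}. card {w\<in>B. f w = s}) \<in> {1..p} \<rightarrow>\<^sub>E {0..card B}"
      using block_props(3)[OF B] by (auto intro: card_mono)
    moreover have "(\<Sum>s\<in>{1..p}. (\<lambda>s\<in>{1..p}. card {w\<in>B. f w = s}) s) = card B"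
      using card_fibers[OF block_props(3)[OF B] img[OF f B]] by simp
    ultimately show "(\<lambda>s\<in>{1..p}. card {w\<in>B. f w = s}) \<in>
        {g \<in> {1..p} \<rightarrow>\<^sub>E {0..card B}. (\<Sum>s\<in>{1..p}. g s) = card B}" by blast
  qed
  have expo: "card {(i,j)\<in>compl_ideal n I. f i = f j} = exponent n I p (cnt f)" if f: "f \<in> ?W" for f
  proof -
    have "card {(i,j)\<in>compl_ideal n I. f i = f j} =
      (\<Sum>s\<in>{1..p}. \<Sum>B\<in>?bl. (card {w\<in>B. f w = s} choose 2) +
        card {w\<in>B. f w = s} * (\<Sum>C\<in>later_blocks n I B. card {w\<in>C. f w = s}))"
      by (rule mono_count[OF n ideal full f])
    also have "\<dots> = (\<Sum>B\<in>?bl. \<Sum>s\<in>{1..p}. (card {w\<in>B. f w = s} choose 2) +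
        card {w\<in>B. f w = s} * (\<Sum>C\<in>later_blocks n I B. card {w\<in>C. f w = s}))"
      by (rule sum.swap)
    also have "\<dots> = exponent n I p (cnt f)"
      unfolding exponent_def
    proof (intro sum.cong refl)
      fix B s assume B: "B \<in> ?bl" and s: "s \<in> {1..p}"
      have "(\<Sum>C\<in>later_blocks n I B. card {w\<in>C. f w = s}) = (\<Sum>C\<in>later_blocks n I B. cnt f C s)"
        using later_sub s by (intro sum.cong refl) (auto simp: cnt_def)
      then show "(card {w\<in>B. f w = s} choose 2) + card {w\<in>B. f w = s} * (\<Sum>C\<in>later_blocks n I B. card {w\<in>C. f w = s})
        = (cnt f B s choose 2) + cnt f B s * (\<Sum>C\<in>later_blocks n I B. cnt f C s)"
        using B s by (simp add: cnt_def)
    qed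
    finally show ?thesis .
  qed
  have fib: "card {f \<in> ?W. cnt f = a} = (\<Prod>B\<in>?bl. multinomial p (card B) (a B))"
    if a: "a \<in> families n I p" for a
  proof -
    define P where "P B g = (\<forall>s\<in>{1..p}. card {w\<in>B. g w = s} = a B s)" for B and g :: "nat \<Rightarrow> nat"
    have aB: "B \<in> ?bl \<Longrightarrow> a B \<in> {1..p} \<rightarrow>\<^sub>E {0..card B} \<and> (\<Sum>s\<in>{1..p}. a B s) = card B" for B
      using a by (auto simp: families_def)
    have "{f \<in> ?W. cnt f = a} = {f \<in> ?W. \<forall>B\<in>{1..n} // Rs n I. P B (restrict f B)}"
    proof -
      have "cnt f = a \<longleftrightarrow> (\<forall>B\<in>?bl. P B (restrict f B))" for f
      proof
        assume "cnt f = a"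
        then have "\<forall>B\<in>?bl. \<forall>s\<in>{1..p}. card {w\<in>B. f w = s} = a B s" by (auto simp: cnt_def)
        then show "\<forall>B\<in>?bl. P B (restrict f B)" unfolding P_def rs by blast
      next
        assume h: "\<forall>B\<in>?bl. P B (restrict f B)"
        show "cnt f = a"
        proof
          fix B show "cnt f B = a B"
          proof (cases "B \<in> ?bl")
            case True
            show ?thesis
            proof
              fix s show "cnt f B s = a B s"
              proof (cases "s \<in> {1..p}")
                case True2: True
                have "card {w\<in>B. f w = s} = a B s" using h True True2 unfolding P_def rs by blast
                then show ?thesis using True True2 by (simp add: cnt_def)
              next
                case False
                then show ?thesis using aB[OF True] True by (auto simp: cnt_def PiE_def extensional_def)
              qed
            qed
          next
            case False
            then show ?thesis using a by (auto simp: cnt_def families_def PiE_def extensional_def)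
          qed
        qed
      qed
      then show ?thesis by (simp add: blocks_quot)
    qed
    also have "card \<dots> = (\<Prod>B\<in>{1..n} // Rs n I. card {g \<in> B \<rightarrow>\<^sub>E {1..p}. P B g})"
      by (rule card_split[OF Rs_equiv]) simp
    also have "\<dots> = (\<Prod>B\<in>?bl. multinomial p (card B) (a B))"
      unfolding blocks_quot[symmetric]
    proof (rule prod.cong[OF refl])
      fix B assume B: "B \<in> ?bl"
      show "card {g \<in> B \<rightarrow>\<^sub>E {1..p}. P B g} = multinomial p (card B) (a B)"
        unfolding P_def using multinomial_eq[OF block_props(3)[OF B], where p=p and a="a B"] aB[OF B] by simp
    qed
    finally show ?thesis .
  qed
  have "(\<Sum>f\<in>?W. t ^ card {(i,j)\<in>compl_ideal n I. f i = f j}) = (\<Sum>f\<in>?W. t ^ exponent n I p (cnt f))"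
    using expo by (intro sum.cong refl) simp
  also have "\<dots> = (\<Sum>a\<in>families n I p. \<Sum>f\<in>{f\<in>?W. cnt f = a}. t ^ exponent n I p (cnt f))"
    by (rule sum.group[symmetric]) (use finW finFam cntF in auto)
  also have "\<dots> = (\<Sum>a\<in>families n I p. real (card {f\<in>?W. cnt f = a}) * t ^ exponent n I p a)"
    by (intro sum.cong refl) simp
  also have "\<dots> = (\<Sum>a\<in>families n I p. real (\<Prod>B\<in>?bl. multinomial p (card B) (a B)) * t ^ exponent n I p a)"
    using fib by (intro sum.cong refl) simp
  finally show ?thesis .
qed

theorem mainTheorem11:
  fixes n p :: nat and I :: "(nat \<times> nat) set" and t :: real
  assumes "n \<ge> 2"
    and "is_ideal n I"
    and "is_full n I"
    and "prime p" and "odd p"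
  shows "coboundary n (arrangement_of n I) (real p) t =
    (1 / real p) * (\<Sum>a\<in>families n I p.
       real (\<Prod>B\<in>blocks n I. multinomial p (card B) (a B)) * t ^ exponent n I p a)"
proof -
  have p: "p \<ge> 1" using assms(4) prime_gt_0_nat by (simp add: Suc_le_eq)
  have n1: "n \<ge> 1" using assms(1) by simp
  show ?thesis
    unfolding lhs_reduce[OF assms(3) n1 p] rhs_count[OF assms(1-3)] ..
qed

end
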